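(* Let $\mathcal{M}=\langle S,\iota,\mathsf{Act},P,\mathsf{Z},\mathsf{obs}\rangle$ be an MDP and $r\colon S\to\mathbb{R}_{\ge0}$. For every trace $\tau\in\mathsf{Z}^+$, $R_r(\tau)=\max_{\sigma\in\Sigma_{\mathrm{DC}}(|\tau|)}\sum_{\pi\in\mathrm{Paths}(\tau)}\Pr^\sigma(\pi\mid\tau)\cdot r(\mathrm{last}(\pi))$.
   Context: An MDP is a tuple $\langle S,\iota,\mathsf{Act},P,\mathsf{Z},\mathsf{obs}\rangle$: finite state set $S$, initial distribution $\iota\in\mathsf{Distr}(S)$, finite action set $\mathsf{Act}$, partial transition function $P\colon S\times\mathsf{Act}\rightharpoonup\mathsf{Distr}(S)$, finite observation set $\mathsf{Z}$, observation function $\mathsf{obs}\colon S\to\mathsf{Distr}(\mathsf{Z})$; $\mathsf{AvAct}(s)=\{\alpha\mid P(s,\alpha)\text{ defined}\}\neq\emptyset$. A finite path is $\pi=s_0a_0\dots a_{n-1}s_n$ with $\iota(s_0)>0$, $P(s_i,a_i)(s_{i+1})>0$; its length $|\pi|=n$ is its number of actions; $\mathrm{last}(\pi)=s_n$. A scheduler $\sigma$ maps each finite path $\pi$ to a distribution on $\mathsf{AvAct}(\mathrm{last}(\pi))$; $\Sigma$ is the set of schedulers; $\Pr^\sigma(\pi)=\iota(s_0)\prod_{i<n}\sigma(s_0a_0\dots s_i)(a_i)P(s_i,a_i)(s_{i+1})$. For a trace $\tau=z_0\dots z_n$ (length $|\tau|$) and path $\pi=s_0\dots s_m$, $\Pr(\tau\mid\pi)=\prod_{i=0}^n\mathsf{obs}(s_i)(z_i)$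 if $m=n$, else $0$; $\mathrm{Paths}(\tau)$ are the paths with as many states as $\tau$ has observations; $\Pr^\sigma(\tau)=\sum_\pi\Pr^\sigma(\pi)\Pr(\tau\mid\pi)$; $\Pr^\sigma(\pi\mid\tau)=\Pr(\tau\mid\pi)\Pr^\sigma(\pi)/\Pr^\sigma(\tau)$ ($0/0=0$). $R_r(\tau)=\sup_{\sigma\in\Sigma}\sum_{\pi\in\mathrm{Paths}(\tau)}\Pr^\sigma(\pi\mid\tau)r(\mathrm{last}(\pi))$. For $k\in\mathbb{N}$, $\Sigma_{\mathrm{DC}}(k)$ is the set of deterministic schedulers (each $\sigma(\pi)$ is Dirac) such that for all finite paths $\pi,\pi'$: if $\mathrm{last}(\pi)=\mathrm{last}(\pi')$ and ($|\pi|=|\pi'|$ or ($|\pi|>k$ and $|\pi'|>k$)), then $\sigma(\pi)=\sigma(\pi')$. *)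

theory Defs
  imports "HOL-Probability.Probability_Mass_Function"
begin

text \<open>An MDP is given by: state type 's (finite), action type 'a (finite),
observation type 'z (finite), initial distribution iota :: 's pmf,
partial transition function P :: 's => 'a => 's pmf option, and
observation function obs :: 's => 'z pmf.\<close>

definition AvAct :: "('s \<Rightarrow> 'a \<Rightarrow> 's pmf option) \<Rightarrow> 's \<Rightarrow> 'a set" where
  "AvAct P s = {a. P s a \<noteq> None}"

text \<open>A finite path s0 a0 s1 ... a(n-1) sn is represented as (s0, [(a0,s1),...,(a(n-1),sn)]).\<close>
type_synonym ('s, 'a) fpath = "'s \<times> ('a \<times> 's) list"

fun pstates :: "('s, 'a) fpath \<Rightarrow> 's list" where
  "pstates (s, xs) = s # map snd xs"

fun plen :: "('s, 'a) fpath \<Rightarrow> nat" where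
  "plen (s, xs) = length xs"

fun plast :: "('s, 'a) fpath \<Rightarrow> 's" where
  "plast (s, xs) = last (s # map snd xs)"

fun is_path :: "'s pmf \<Rightarrow> ('s \<Rightarrow> 'a \<Rightarrow> 's pmf option) \<Rightarrow> ('s, 'a) fpath \<Rightarrow> bool" where
  "is_path iota P (s, xs) \<longleftrightarrow> pmf iota s > 0 \<and>
     (\<forall>i < length xs. case P ((s # map snd xs) ! i) (fst (xs ! i)) of
        None \<Rightarrow> False | Some d \<Rightarrow> pmf d (snd (xs ! i)) > 0)"

definition scheduler :: "'s pmf \<Rightarrow> ('s \<Rightarrow> 'a \<Rightarrow> 's pmf option) \<Rightarrow> (('s, 'a) fpath \<Rightarrow> 'a pmf) \<Rightarrow> bool" where
  "scheduler iota P \<sigma> \<longleftrightarrow> (\<forall>\<pi>. is_path iota P \<pi> \<longrightarrow> set_pmf (\<sigma> \<pi>) \<subseteq> AvAct P (plast \<pi>))"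

fun Pr_path :: "'s pmf \<Rightarrow> ('s \<Rightarrow> 'a \<Rightarrow> 's pmf option) \<Rightarrow> (('s, 'a) fpath \<Rightarrow> 'a pmf) \<Rightarrow> ('s, 'a) fpath \<Rightarrow> real" where
  "Pr_path iota P \<sigma> (s, xs) = pmf iota s *
     (\<Prod>i < length xs. pmf (\<sigma> (s, take i xs)) (fst (xs ! i)) *
        (case P ((s # map snd xs) ! i) (fst (xs ! i)) of None \<Rightarrow> 0 | Some d \<Rightarrow> pmf d (snd (xs ! i))))"

definition Pr_obs :: "('s \<Rightarrow> 'z pmf) \<Rightarrow> 'z list \<Rightarrow> ('s, 'a) fpath \<Rightarrow> real" where
  "Pr_obs obs \<tau> \<pi> = (if length \<tau> = length (pstates \<pi>)
      then (\<Prod>i < length \<tau>. pmf (obs (pstates \<pi> ! i)) (\<tau> ! i)) else 0)"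

definition Paths :: "'s pmf \<Rightarrow> ('s \<Rightarrow> 'a \<Rightarrow> 's pmf option) \<Rightarrow> 'z list \<Rightarrow> ('s, 'a) fpath set" where
  "Paths iota P \<tau> = {\<pi>. is_path iota P \<pi> \<and> length (pstates \<pi>) = length \<tau>}"

text \<open>Pr^sigma(tau): only paths in Paths(tau) contribute (Pr(tau|pi)=0 otherwise).\<close>
definition Pr_trace :: "'s pmf \<Rightarrow> ('s \<Rightarrow> 'a \<Rightarrow> 's pmf option) \<Rightarrow> ('s \<Rightarrow> 'z pmf) \<Rightarrow>
    (('s, 'a) fpath \<Rightarrow> 'a pmf) \<Rightarrow> 'z list \<Rightarrow> real" where
  "Pr_trace iota P obs \<sigma> \<tau> = (\<Sum>\<pi> \<in> Paths iota P \<tau>. Pr_path iota P \<sigma> \<pi> * Pr_obs obs \<tau> \<pi>)"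

text \<open>Pr^sigma(pi | tau), with 0/0 = 0 (Isabelle's division convention).\<close>
definition Pr_cond :: "'s pmf \<Rightarrow> ('s \<Rightarrow> 'a \<Rightarrow> 's pmf option) \<Rightarrow> ('s \<Rightarrow> 'z pmf) \<Rightarrow>
    (('s, 'a) fpath \<Rightarrow> 'a pmf) \<Rightarrow> ('s, 'a) fpath \<Rightarrow> 'z list \<Rightarrow> real" where
  "Pr_cond iota P obs \<sigma> \<pi> \<tau> = Pr_obs obs \<tau> \<pi> * Pr_path iota P \<sigma> \<pi> / Pr_trace iota P obs \<sigma> \<tau>"

definition exp_reward :: "'s pmf \<Rightarrow> ('s \<Rightarrow> 'a \<Rightarrow> 's pmf option) \<Rightarrow> ('s \<Rightarrow> 'z pmf) \<Rightarrow>
    ('s \<Rightarrow> real) \<Rightarrow> (('s, 'a) fpath \<Rightarrow> 'a pmf) \<Rightarrow> 'z list \<Rightarrow> real" where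
  "exp_reward iota P obs r \<sigma> \<tau> = (\<Sum>\<pi> \<in> Paths iota P \<tau>. Pr_cond iota P obs \<sigma> \<pi> \<tau> * r (plast \<pi>))"

definition R_r :: "'s pmf \<Rightarrow> ('s \<Rightarrow> 'a \<Rightarrow> 's pmf option) \<Rightarrow> ('s \<Rightarrow> 'z pmf) \<Rightarrow>
    ('s \<Rightarrow> real) \<Rightarrow> 'z list \<Rightarrow> real" where
  "R_r iota P obs r \<tau> = (SUP \<sigma> \<in> {\<sigma>. scheduler iota P \<sigma>}. exp_reward iota P obs r \<sigma> \<tau>)"

definition deterministic :: "'s pmf \<Rightarrow> ('s \<Rightarrow> 'a \<Rightarrow> 's pmf option) \<Rightarrow> (('s, 'a) fpath \<Rightarrow> 'a pmf) \<Rightarrow> bool" where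
  "deterministic iota P \<sigma> \<longleftrightarrow> (\<forall>\<pi>. is_path iota P \<pi> \<longrightarrow> (\<exists>a. \<sigma> \<pi> = return_pmf a))"

definition Sigma_DC :: "'s pmf \<Rightarrow> ('s \<Rightarrow> 'a \<Rightarrow> 's pmf option) \<Rightarrow> nat \<Rightarrow> (('s, 'a) fpath \<Rightarrow> 'a pmf) set" where
  "Sigma_DC iota P k = {\<sigma>. scheduler iota P \<sigma> \<and> deterministic iota P \<sigma> \<and>
     (\<forall>\<pi> \<pi>'. is_path iota P \<pi> \<and> is_path iota P \<pi>' \<and> plast \<pi> = plast \<pi>' \<and>
        (plen \<pi> = plen \<pi>' \<or> (plen \<pi> > k \<and> plen \<pi>' > k)) \<longrightarrow> \<sigma> \<pi> = \<sigma> \<pi>')}"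

text \<open>Length of a trace z0 ... zn is n (number of observations minus one), matching
the path-length convention.\<close>
definition tlen :: "'z list \<Rightarrow> nat" where
  "tlen \<tau> = length \<tau> - 1"

end

theory Submission
  imports Defs
begin


lemma finite_len: "finite {xs :: ('b::finite) list. length xs = n}"
  using finite_lists_length_eq[of "UNIV::'b set" n] by simp

lemma sum_snoc:
  fixes f :: "('b::finite) list \<Rightarrow> real"
  shows "(\<Sum>ys\<in>{ys. length ys = Suc m}. f ys) = (\<Sum>xs\<in>{xs. length xs = m}. \<Sum>x\<in>UNIV. f (xs @ [x]))"
proof -
  have img: "{ys :: 'b list. length ys = Suc m} = (\<lambda>(xs,x). xs @ [x]) ` ({xs. length xs = m} \<times> UNIV)"
  proof (rule set_eqI, rule iffI)
    fix ys :: "'b list" assume "ys \<in> {ys. length ys = Suc m}"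
    then have "ys \<noteq> []" "length (butlast ys) = m" by auto
    then have "ys = butlast ys @ [last ys]" "length (butlast ys) = m"
      by auto
    then show "ys \<in> (\<lambda>(xs,x). xs @ [x]) ` ({xs. length xs = m} \<times> UNIV)"
      by (metis (mono_tags, lifting) SigmaI UNIV_I case_prod_conv image_eqI mem_Collect_eq)
  qed auto
  have inj: "inj_on (\<lambda>(xs,x). xs @ [x]) ({xs :: 'b list. length xs = m} \<times> UNIV)"
    by (auto simp: inj_on_def)
  have "(\<Sum>ys\<in>{ys. length ys = Suc m}. f ys) = (\<Sum>p\<in>{xs. length xs = m} \<times> UNIV. f ((\<lambda>(xs,x). xs @ [x]) p))"
    by (subst img, subst sum.reindex[OF inj]) (simp add: comp_def)
  also have "\<dots> = (\<Sum>xs\<in>{xs. length xs = m}. \<Sum>x\<in>UNIV. f (xs @ [x]))"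
    unfolding sum.cartesian_product by (rule sum.cong) auto
  finally show ?thesis .
qed

lemma sum_pair_univ:
  fixes f :: "('b::finite \<times> 'c::finite) \<Rightarrow> real"
  shows "(\<Sum>x\<in>UNIV. f x) = (\<Sum>a\<in>UNIV. \<Sum>b\<in>UNIV. f (a,b))"
  unfolding sum.cartesian_product UNIV_Times_UNIV case_prod_eta ..

lemma Pr_path_nonneg: "Pr_path iota P \<sigma> (s, xs) \<ge> 0"
  by (auto intro!: prod_nonneg mult_nonneg_nonneg split: option.splits)

lemma Pr_obs_nonneg: "Pr_obs obs \<tau> \<pi> \<ge> 0"
  by (auto simp: Pr_obs_def intro!: prod_nonneg)

lemma Pr_path_nz:
  assumes "Pr_path iota P \<sigma> (s, xs) \<noteq> 0"
  shows "is_path iota P (s, xs)"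
proof -
  have 1: "pmf iota s \<noteq> 0" using assms by auto
  have 2: "\<forall>i<length xs. (case P ((s # map snd xs) ! i) (fst (xs ! i)) of None \<Rightarrow> 0 | Some d \<Rightarrow> pmf d (snd (xs ! i))) \<noteq> (0::real)"
    using assms by auto
  show ?thesis
  proof (simp only: is_path.simps, intro conjI allI impI)
    show "pmf iota s > 0" using 1 pmf_nonneg[of iota s] by linarith
  next
    fix i assume "i < length xs"
    with 2 have nz: "(case P ((s # map snd xs) ! i) (fst (xs ! i)) of None \<Rightarrow> 0 | Some d \<Rightarrow> pmf d (snd (xs ! i))) \<noteq> (0::real)" by blast
    then show "case P ((s # map snd xs) ! i) (fst (xs ! i)) of None \<Rightarrow> False | Some d \<Rightarrow> pmf d (snd (xs ! i)) > 0"
    proof (cases "P ((s # map snd xs) ! i) (fst (xs ! i))")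
      case None
      then show ?thesis using nz by simp
    next
      case (Some d)
      then have "pmf d (snd (xs ! i)) \<noteq> 0" using nz by simp
      then show ?thesis using Some pmf_nonneg[of d "snd (xs ! i)"] by simp
    qed
  qed
qed

lemma nth_snoc_states: "i \<le> length xs \<Longrightarrow> (s # map snd xs @ [s']) ! i = (s # map snd xs) ! i"
  by (cases i) (auto simp: nth_append)


lemma Pr_path_snoc:
  "Pr_path iota P \<sigma> (s, xs @ [(a, s')]) = Pr_path iota P \<sigma> (s, xs) * pmf (\<sigma> (s, xs)) a *
     (case P (plast (s, xs)) a of None \<Rightarrow> 0 | Some d \<Rightarrow> pmf d s')"
proof -
  have "(\<Prod>i < length (xs @ [(a, s')]). pmf (\<sigma> (s, take i (xs @ [(a, s')]))) (fst ((xs @ [(a, s')]) ! i)) *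
        (case P ((s # map snd (xs @ [(a, s')])) ! i) (fst ((xs @ [(a, s')]) ! i)) of None \<Rightarrow> 0 | Some d \<Rightarrow> pmf d (snd ((xs @ [(a, s')]) ! i))))
     = (\<Prod>i < length xs. pmf (\<sigma> (s, take i xs)) (fst (xs ! i)) *
        (case P ((s # map snd xs) ! i) (fst (xs ! i)) of None \<Rightarrow> 0 | Some d \<Rightarrow> pmf d (snd (xs ! i)))) *
       (pmf (\<sigma> (s, xs)) a * (case P (plast (s, xs)) a of None \<Rightarrow> 0 | Some d \<Rightarrow> pmf d s'))"
  proof -
    have eq: "(s # map snd (xs @ [(a, s')])) ! i = (s # map snd xs) ! i" if "i \<le> length xs" for i
      using that nth_snoc_states[OF that] by simp
    show ?thesis
      apply (simp only: length_append_singleton prod.lessThan_Suc)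
      apply (rule arg_cong2[where f="(*)"])
       apply (rule prod.cong, simp)
       apply (auto simp: nth_snoc_states nth_append split: option.splits)[1]
      apply (auto simp: nth_snoc_states last_conv_nth nth_append split: option.splits)
      done
  qed
  then show ?thesis by (simp add: mult.assoc)
qed


lemma Pr_obs_snoc:
  assumes "length \<tau> = Suc (length xs)"
  shows "Pr_obs obs (\<tau> @ [z]) (s, xs @ [(a, s')]) = Pr_obs obs \<tau> (s, xs) * pmf (obs s') z"
proof -
  have "(\<Prod>i<length xs. pmf (obs ((s # map snd xs @ [s']) ! i)) (\<tau> ! i)) =
        (\<Prod>i<length xs. pmf (obs ((s # map snd xs) ! i)) (\<tau> ! i))"
    by (rule prod.cong) (auto simp: nth_snoc_states)
  moreover have "(s # map snd xs @ [s']) ! Suc (length xs) = s'"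
    by (simp add: nth_append)
  moreover have "(\<Prod>i<Suc (Suc (length xs)). pmf (obs ((s # map snd xs @ [s']) ! i)) ((\<tau> @ [z]) ! i))
     = (\<Prod>i<Suc (length xs). pmf (obs ((s # map snd xs @ [s']) ! i)) ((\<tau> @ [z]) ! i)) * pmf (obs s') z"
    using assms by (simp add: nth_append)
  moreover have "(\<Prod>i<Suc (length xs). pmf (obs ((s # map snd xs @ [s']) ! i)) ((\<tau> @ [z]) ! i))
     = (\<Prod>i<Suc (length xs). pmf (obs ((s # map snd xs) ! i)) (\<tau> ! i))"
    using assms by (intro prod.cong) (auto simp: nth_append nth_snoc_states)
  ultimately show ?thesis using assms
    by (simp add: Pr_obs_def del: prod.lessThan_Suc)
qed



declare Pr_path.simps[simp del]

definition G :: "'s pmf \<Rightarrow> ('s \<Rightarrow> 'a \<Rightarrow> 's pmf option) \<Rightarrow> ('s \<Rightarrow> 'z pmf) \<Rightarrow>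
    (('s, 'a) fpath \<Rightarrow> 'a pmf) \<Rightarrow> 'z list \<Rightarrow> ('s \<Rightarrow> real) \<Rightarrow> real" where
  "G iota P obs \<sigma> \<tau> h = (\<Sum>s\<in>UNIV. \<Sum>xs\<in>{xs. length xs = length \<tau> - 1}.
      Pr_path iota P \<sigma> (s, xs) * Pr_obs obs \<tau> (s, xs) * h (plast (s, xs)))"

definition mkd :: "(nat \<Rightarrow> 's \<Rightarrow> 'a) \<Rightarrow> ('s, 'a) fpath \<Rightarrow> 'a pmf" where
  "mkd d \<pi> = return_pmf (d (plen \<pi>) (plast \<pi>))"

definition Qf :: "('s \<Rightarrow> 'a \<Rightarrow> 's pmf option) \<Rightarrow> ('s \<Rightarrow> 'z pmf) \<Rightarrow> 'z \<Rightarrow> ('s \<Rightarrow> real) \<Rightarrow> 's \<Rightarrow> 'a \<Rightarrow> real" where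
  "Qf P obs z h s a = (\<Sum>s'\<in>UNIV. (case P s a of None \<Rightarrow> 0 | Some dd \<Rightarrow> pmf dd s') * pmf (obs s') z * h s')"

lemma G_snoc:
  fixes iota :: "('s::finite) pmf" and P :: "'s \<Rightarrow> ('a::finite) \<Rightarrow> 's pmf option"
    and obs :: "'s \<Rightarrow> ('z::finite) pmf"
  assumes "\<tau> \<noteq> []"
  shows "G iota P obs \<sigma> (\<tau> @ [z]) h = (\<Sum>s\<in>UNIV. \<Sum>xs\<in>{xs. length xs = length \<tau> - 1}.
      Pr_path iota P \<sigma> (s, xs) * Pr_obs obs \<tau> (s, xs) *
      (\<Sum>a\<in>UNIV. pmf (\<sigma> (s, xs)) a * Qf P obs z h (plast (s, xs)) a))"
proof -
  have len: "length (\<tau> @ [z]) - 1 = Suc (length \<tau> - 1)" using assms by (cases \<tau>) auto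
  show ?thesis
    unfolding G_def len
  proof (rule sum.cong[OF refl])
    fix s
    show "(\<Sum>ys\<in>{ys. length ys = Suc (length \<tau> - 1)}.
            Pr_path iota P \<sigma> (s, ys) * Pr_obs obs (\<tau> @ [z]) (s, ys) * h (plast (s, ys))) =
          (\<Sum>xs\<in>{xs. length xs = length \<tau> - 1}.
            Pr_path iota P \<sigma> (s, xs) * Pr_obs obs \<tau> (s, xs) *
            (\<Sum>a\<in>UNIV. pmf (\<sigma> (s, xs)) a * Qf P obs z h (plast (s, xs)) a))"
      unfolding sum_snoc
    proof (rule sum.cong[OF refl])
      fix xs :: "('a \<times> 's) list" assume "xs \<in> {xs. length xs = length \<tau> - 1}"
      then have lx: "length \<tau> = Suc (length xs)" using assms by (cases \<tau>) auto
      show "(\<Sum>x\<in>UNIV. Pr_path iota P \<sigma> (s, xs @ [x]) * Pr_obs obs (\<tau> @ [z]) (s, xs @ [x]) *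
              h (plast (s, xs @ [x]))) =
            Pr_path iota P \<sigma> (s, xs) * Pr_obs obs \<tau> (s, xs) *
            (\<Sum>a\<in>UNIV. pmf (\<sigma> (s, xs)) a * Qf P obs z h (plast (s, xs)) a)"
      proof -
        have "\<And>a b. Pr_path iota P \<sigma> (s, xs @ [(a,b)]) * Pr_obs obs (\<tau> @ [z]) (s, xs @ [(a,b)]) *
              h (plast (s, xs @ [(a,b)])) = (Pr_path iota P \<sigma> (s, xs) * Pr_obs obs \<tau> (s, xs)) *
              (pmf (\<sigma> (s, xs)) a * ((case P (plast (s, xs)) a of None \<Rightarrow> 0 | Some d \<Rightarrow> pmf d b) * pmf (obs b) z * h b))"
          by (simp only: Pr_path_snoc Pr_obs_snoc[OF lx]) (simp add: mult_ac)
        then show ?thesis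
          unfolding sum_pair_univ Qf_def
          by (simp only: sum_distrib_left[symmetric])
      qed
    qed
  qed
qed

lemma Pr_path_cong:
  assumes "\<And>i. i < length xs \<Longrightarrow> \<sigma>1 (s, take i xs) = \<sigma>2 (s, take i xs)"
  shows "Pr_path iota P \<sigma>1 (s, xs) = Pr_path iota P \<sigma>2 (s, xs)"
  using assms by (simp add: Pr_path.simps del: plast.simps)

lemma G_cong:
  assumes "\<And>\<pi>. plen \<pi> < length \<tau> - 1 \<Longrightarrow> \<sigma>1 \<pi> = \<sigma>2 \<pi>"
  shows "G iota P obs \<sigma>1 \<tau> h = G iota P obs \<sigma>2 \<tau> h"
  unfolding G_def
  by (intro sum.cong refl arg_cong2[where f="(*)"] Pr_path_cong assms) auto

lemma G_single:
  "G iota P obs \<sigma>1 [z] h = G iota P obs \<sigma>2 [z] h"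
  by (rule G_cong) auto

lemma key:
  fixes iota :: "('s::finite) pmf" and P :: "'s \<Rightarrow> ('a::finite) \<Rightarrow> 's pmf option"
    and obs :: "'s \<Rightarrow> ('z::finite) pmf"
  assumes av: "\<forall>s. AvAct P s \<noteq> {}"
  shows "\<tau> \<noteq> [] \<Longrightarrow> \<exists>d. (\<forall>t s. d t s \<in> AvAct P s) \<and>
     (\<forall>\<sigma>. scheduler iota P \<sigma> \<longrightarrow> G iota P obs \<sigma> \<tau> h \<le> G iota P obs (mkd d) \<tau> h)"
proof (induction \<tau> arbitrary: h rule: rev_induct)
  case Nil
  then show ?case by simp
next
  case (snoc z \<tau>)
  show ?case
  proof (cases "\<tau> = []")
    case True
    define d0 :: "nat \<Rightarrow> 's \<Rightarrow> 'a" where "d0 = (\<lambda>t s. SOME a. a \<in> AvAct P s)"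
    have "\<forall>t s. d0 t s \<in> AvAct P s" unfolding d0_def using av by (simp add: some_in_eq)
    moreover have "G iota P obs \<sigma> (\<tau> @ [z]) h \<le> G iota P obs (mkd d0) (\<tau> @ [z]) h" for \<sigma>
      using True G_single[of iota P obs \<sigma> z h "mkd d0"] by simp
    ultimately show ?thesis by blast
  next
    case False
    define hs where "hs = (\<lambda>s. Max (Qf P obs z h s ` AvAct P s))"
    have hs_ex: "\<exists>a. a \<in> AvAct P s \<and> Qf P obs z h s a = hs s" for s
    proof -
      have "hs s \<in> Qf P obs z h s ` AvAct P s" unfolding hs_def
        using av by (intro Max_in) auto
      then show ?thesis by auto
    qed
    have hs_ge: "a \<in> AvAct P s \<Longrightarrow> Qf P obs z h s a \<le> hs s" for a s
      unfolding hs_def by (intro Max_ge) auto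
    define as where "as = (\<lambda>s. SOME a. a \<in> AvAct P s \<and> Qf P obs z h s a = hs s)"
    have as: "as s \<in> AvAct P s \<and> Qf P obs z h s (as s) = hs s" for s
      unfolding as_def using someI_ex[OF hs_ex] by blast
    obtain d where d: "\<forall>t s. d t s \<in> AvAct P s"
      and dmax: "\<forall>\<sigma>. scheduler iota P \<sigma> \<longrightarrow> G iota P obs \<sigma> \<tau> hs \<le> G iota P obs (mkd d) \<tau> hs"
      using snoc.IH[OF False, of hs] by blast
    define d' where "d' = (\<lambda>t s. if t = length \<tau> - 1 then as s else d t s)"
    have d': "\<forall>t s. d' t s \<in> AvAct P s" unfolding d'_def using d as by auto
    have step1: "G iota P obs \<sigma> (\<tau> @ [z]) h \<le> G iota P obs \<sigma> \<tau> hs" if sch: "scheduler iota P \<sigma>" for \<sigma>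
      unfolding G_snoc[OF False] unfolding G_def
    proof (intro sum_mono)
      fix s xs
      show "Pr_path iota P \<sigma> (s, xs) * Pr_obs obs \<tau> (s, xs) *
            (\<Sum>a\<in>UNIV. pmf (\<sigma> (s, xs)) a * Qf P obs z h (plast (s, xs)) a)
          \<le> Pr_path iota P \<sigma> (s, xs) * Pr_obs obs \<tau> (s, xs) * hs (plast (s, xs))"
      proof (cases "Pr_path iota P \<sigma> (s, xs) = 0")
        case True then show ?thesis by simp
      next
        case False
        then have ip: "is_path iota P (s, xs)" by (rule Pr_path_nz)
        have supp: "set_pmf (\<sigma> (s, xs)) \<subseteq> AvAct P (plast (s, xs))"
          using sch ip unfolding scheduler_def by blast
        have "(\<Sum>a\<in>UNIV. pmf (\<sigma> (s, xs)) a * Qf P obs z h (plast (s, xs)) a)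
            \<le> (\<Sum>a\<in>UNIV. pmf (\<sigma> (s, xs)) a * hs (plast (s, xs)))"
        proof (rule sum_mono)
          fix a
          show "pmf (\<sigma> (s, xs)) a * Qf P obs z h (plast (s, xs)) a \<le> pmf (\<sigma> (s, xs)) a * hs (plast (s, xs))"
          proof (cases "a \<in> set_pmf (\<sigma> (s, xs))")
            case True
            then show ?thesis using supp hs_ge by (intro mult_left_mono) auto
          next
            case False
            then show ?thesis by (simp add: set_pmf_iff)
          qed
        qed
        also have "\<dots> = hs (plast (s, xs))"
          by (simp add: sum_distrib_right[symmetric] sum_pmf_eq_1)
        finally show ?thesis
          using Pr_path_nonneg Pr_obs_nonneg by (intro mult_left_mono mult_nonneg_nonneg) auto
      qed
    qed
    have step2: "G iota P obs (mkd d') (\<tau> @ [z]) h = G iota P obs (mkd d') \<tau> hs"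
      unfolding G_snoc[OF False] unfolding G_def
    proof (intro sum.cong refl)
      fix s xs assume "xs \<in> {xs :: ('a \<times> 's) list. length xs = length \<tau> - 1}"
      then have "mkd d' (s, xs) = return_pmf (as (plast (s, xs)))"
        unfolding mkd_def d'_def by simp
      then have "(\<Sum>a\<in>UNIV. pmf (mkd d' (s, xs)) a * Qf P obs z h (plast (s, xs)) a) = hs (plast (s, xs))"
        using as by (simp add: pmf_return indicator_def)
      then show "Pr_path iota P (mkd d') (s, xs) * Pr_obs obs \<tau> (s, xs) *
          (\<Sum>a\<in>UNIV. pmf (mkd d' (s, xs)) a * Qf P obs z h (plast (s, xs)) a) =
          Pr_path iota P (mkd d') (s, xs) * Pr_obs obs \<tau> (s, xs) * hs (plast (s, xs))"
        by simp
    qed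
    have step3: "G iota P obs (mkd d') \<tau> hs = G iota P obs (mkd d) \<tau> hs"
      by (rule G_cong) (auto simp: mkd_def d'_def)
    have "\<forall>\<sigma>. scheduler iota P \<sigma> \<longrightarrow> G iota P obs \<sigma> (\<tau> @ [z]) h \<le> G iota P obs (mkd d') (\<tau> @ [z]) h"
      using step1 dmax step2 step3 by (metis order_trans)
    then show ?thesis using d' by blast
  qed
qed



lemma sum_Paths:
  fixes iota :: "('s::finite) pmf" and P :: "'s \<Rightarrow> ('a::finite) \<Rightarrow> 's pmf option"
  assumes "\<tau> \<noteq> []"
  shows "(\<Sum>\<pi>\<in>Paths iota P \<tau>. Pr_path iota P \<sigma> \<pi> * g \<pi>) =
    (\<Sum>s\<in>UNIV. \<Sum>xs\<in>{xs. length xs = length \<tau> - 1}. Pr_path iota P \<sigma> (s, xs) * g (s, xs))"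
proof -
  let ?L = "{xs :: ('a \<times> 's) list. length xs = length \<tau> - 1}"
  have sub: "Paths iota P \<tau> \<subseteq> UNIV \<times> ?L"
    using assms by (auto simp: Paths_def)
  have fin: "finite ((UNIV :: 's set) \<times> ?L)" by (rule finite_cartesian_product) (simp, rule finite_len)
  have "(\<Sum>\<pi>\<in>Paths iota P \<tau>. Pr_path iota P \<sigma> \<pi> * g \<pi>) = (\<Sum>\<pi>\<in>UNIV \<times> ?L. Pr_path iota P \<sigma> \<pi> * g \<pi>)"
  proof (rule sum.mono_neutral_left[OF fin sub], rule ballI)
    fix \<pi> assume a: "\<pi> \<in> UNIV \<times> ?L - Paths iota P \<tau>"
    obtain s xs where pi: "\<pi> = (s, xs)" by (cases \<pi>)
    have "\<not> is_path iota P (s, xs)" using a assms unfolding pi Paths_def by (cases \<tau>) auto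
    then have "Pr_path iota P \<sigma> (s, xs) = 0" using Pr_path_nz[of iota P \<sigma> s xs] by blast
    then show "Pr_path iota P \<sigma> \<pi> * g \<pi> = 0" using pi by simp
  qed
  also have "\<dots> = (\<Sum>s\<in>UNIV. \<Sum>xs\<in>?L. Pr_path iota P \<sigma> (s, xs) * g (s, xs))"
    by (simp add: sum.cartesian_product)
  finally show ?thesis .
qed

lemma ER_eq:
  fixes iota :: "('s::finite) pmf" and P :: "'s \<Rightarrow> ('a::finite) \<Rightarrow> 's pmf option"
  assumes "\<tau> \<noteq> []"
  shows "exp_reward iota P obs r \<sigma> \<tau> = G iota P obs \<sigma> \<tau> r / G iota P obs \<sigma> \<tau> (\<lambda>_. 1)"
proof -
  have D: "Pr_trace iota P obs \<sigma> \<tau> = G iota P obs \<sigma> \<tau> (\<lambda>_. 1)"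
    unfolding Pr_trace_def G_def using sum_Paths[OF assms, of iota P \<sigma> "\<lambda>\<pi>. Pr_obs obs \<tau> \<pi>"]
    by simp
  have "exp_reward iota P obs r \<sigma> \<tau> = (\<Sum>\<pi>\<in>Paths iota P \<tau>. Pr_path iota P \<sigma> \<pi> * (Pr_obs obs \<tau> \<pi> * r (plast \<pi>))) / Pr_trace iota P obs \<sigma> \<tau>"
    unfolding exp_reward_def Pr_cond_def sum_divide_distrib
    by (rule sum.cong) (auto simp: mult_ac)
  also have "\<dots> = G iota P obs \<sigma> \<tau> r / G iota P obs \<sigma> \<tau> (\<lambda>_. 1)"
    unfolding D sum_Paths[OF assms] G_def by (simp add: mult_ac)
  finally show ?thesis .
qed

lemma G_lin:
  "G iota P obs \<sigma> \<tau> (\<lambda>s. r s - c) = G iota P obs \<sigma> \<tau> r - c * G iota P obs \<sigma> \<tau> (\<lambda>_. 1)"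
  unfolding G_def by (simp add: right_diff_distrib sum_subtractf sum_distrib_left mult_ac)

lemma G_nonneg:
  assumes "\<And>s. h s \<ge> 0"
  shows "G iota P obs \<sigma> \<tau> h \<ge> 0"
  unfolding G_def using assms Pr_path_nonneg Pr_obs_nonneg
  by (intro sum_nonneg mult_nonneg_nonneg) auto

lemma G_bound:
  fixes r :: "('s::finite) \<Rightarrow> real"
  assumes "\<And>s. r s \<ge> 0"
  shows "G iota P obs \<sigma> \<tau> r \<le> (\<Sum>s\<in>UNIV. r s) * G iota P obs \<sigma> \<tau> (\<lambda>_. 1)"
proof -
  have "G iota P obs \<sigma> \<tau> r \<le> G iota P obs \<sigma> \<tau> (\<lambda>_. \<Sum>s\<in>UNIV. r s)"
    unfolding G_def using assms Pr_path_nonneg Pr_obs_nonneg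
    by (intro sum_mono mult_left_mono mult_nonneg_nonneg member_le_sum) auto
  also have "\<dots> = (\<Sum>s\<in>UNIV. r s) * G iota P obs \<sigma> \<tau> (\<lambda>_. 1)"
    unfolding G_def by (simp add: sum_distrib_left mult_ac)
  finally show ?thesis .
qed

lemma ER_nonneg:
  fixes iota :: "('s::finite) pmf" and P :: "'s \<Rightarrow> ('a::finite) \<Rightarrow> 's pmf option"
  assumes "\<tau> \<noteq> []" "\<And>s. r s \<ge> 0"
  shows "exp_reward iota P obs r \<sigma> \<tau> \<ge> 0"
  unfolding ER_eq[OF assms(1)]
  by (intro divide_nonneg_nonneg G_nonneg) (simp_all add: assms)

definition mk :: "nat \<Rightarrow> (nat \<Rightarrow> 's \<Rightarrow> 'a) \<Rightarrow> ('s, 'a) fpath \<Rightarrow> 'a pmf" where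
  "mk n d \<pi> = return_pmf (d (min (plen \<pi>) n) (plast \<pi>))"

lemma mk_DC:
  assumes "d \<in> {..n} \<rightarrow>\<^sub>E {f. \<forall>s. f s \<in> AvAct P s}"
  shows "mk n d \<in> Sigma_DC iota P n"
proof -
  have av: "\<And>\<pi>. d (min (plen \<pi>) n) (plast \<pi>) \<in> AvAct P (plast \<pi>)"
    using assms by (auto simp: PiE_def Pi_def simp del: plen.simps plast.simps)
  have 1: "scheduler iota P (mk n d)"
    unfolding scheduler_def mk_def using av by (auto simp del: plen.simps plast.simps is_path.simps)
  have 2: "deterministic iota P (mk n d)"
    unfolding deterministic_def mk_def by blast
  have 3: "mk n d \<pi> = mk n d \<pi>'" if "plast \<pi> = plast \<pi>'" "plen \<pi> = plen \<pi>' \<or> (plen \<pi> > n \<and> plen \<pi>' > n)" for \<pi> \<pi>'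
    using that unfolding mk_def by (auto simp: min_def simp del: plen.simps plast.simps)
  show ?thesis unfolding Sigma_DC_def using 1 2 3 by blast
qed



theorem lemma8:
  fixes iota :: "('s::finite) pmf"
    and P :: "'s \<Rightarrow> ('a::finite) \<Rightarrow> 's pmf option"
    and obs :: "'s \<Rightarrow> ('z::finite) pmf"
    and r :: "'s \<Rightarrow> real"
    and \<tau> :: "'z list"
  assumes "\<forall>s. AvAct P s \<noteq> {}"
    and "\<forall>s. r s \<ge> 0"
    and "\<tau> \<noteq> []"
  shows "\<exists>\<sigma> \<in> Sigma_DC iota P (tlen \<tau>).
           exp_reward iota P obs r \<sigma> \<tau> = R_r iota P obs r \<tau> \<and>
           (\<forall>\<sigma>' \<in> Sigma_DC iota P (tlen \<tau>). exp_reward iota P obs r \<sigma>' \<tau> \<le> exp_reward iota P obs r \<sigma> \<tau>)"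
proof -
  note av = assms(1) and rnn = assms(2) and tne = assms(3)
  define n where "n = tlen \<tau>"
  have n: "n = length \<tau> - 1" unfolding n_def tlen_def ..
  define ER where "ER = (\<lambda>\<sigma>. exp_reward iota P obs r \<sigma> \<tau>)"
  define A where "A = {f :: 's \<Rightarrow> 'a. \<forall>s. f s \<in> AvAct P s}"
  define DS where "DS = {..n} \<rightarrow>\<^sub>E A"
  have finDS: "finite DS" unfolding DS_def by (intro finite_PiE) auto
  define c where "c = (\<lambda>s. SOME a. a \<in> AvAct P s)"
  have cA: "c \<in> A" unfolding A_def c_def using av by (simp add: some_in_eq)
  have neDS: "DS \<noteq> {}"
  proof -
    have "(\<lambda>t\<in>{..n}. c) \<in> DS" unfolding DS_def using cA by auto
    then show ?thesis by blast
  qed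
  define M where "M = Max ((\<lambda>d. ER (mk n d)) ` DS)"
  have "M \<in> (\<lambda>d. ER (mk n d)) ` DS" unfolding M_def using finDS neDS by (intro Max_in) auto
  then obtain d0 where d0: "d0 \<in> DS" "ER (mk n d0) = M" by auto
  have leM: "ER (mk n d) \<le> M" if "d \<in> DS" for d
    unfolding M_def using finDS that by (intro Max_ge) auto
  have DC: "mk n d \<in> Sigma_DC iota P n" if "d \<in> DS" for d
    using that unfolding DS_def A_def by (rule mk_DC)
  have ER_nn: "ER \<sigma> \<ge> 0" for \<sigma>
    unfolding ER_def using ER_nonneg[OF tne] rnn by blast
  have ER_G: "ER \<sigma> = G iota P obs \<sigma> \<tau> r / G iota P obs \<sigma> \<tau> (\<lambda>_. 1)" for \<sigma>
    unfolding ER_def by (rule ER_eq[OF tne])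
  have G1nn: "G iota P obs \<sigma> \<tau> (\<lambda>_. 1) \<ge> 0" for \<sigma> by (rule G_nonneg) simp
  have Gb: "G iota P obs \<sigma> \<tau> r \<le> (\<Sum>s\<in>UNIV. r s) * G iota P obs \<sigma> \<tau> (\<lambda>_. 1)" for \<sigma>
    using G_bound rnn by blast
  have all: "ER \<sigma> \<le> M" if sch: "scheduler iota P \<sigma>" for \<sigma>
  proof (rule ccontr)
    assume "\<not> ER \<sigma> \<le> M"
    then have gt: "ER \<sigma> > M" by simp
    have M0: "M \<ge> 0" using d0 ER_nn by metis
    define lam where "lam = ER \<sigma>"
    have lampos: "lam > 0" using gt M0 unfolding lam_def by simp
    have G1pos: "G iota P obs \<sigma> \<tau> (\<lambda>_. 1) > 0"
    proof -
      have "G iota P obs \<sigma> \<tau> (\<lambda>_. 1) \<noteq> 0" using lampos ER_G[of \<sigma>] unfolding lam_def by auto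
      then show ?thesis using G1nn[of \<sigma>] by simp
    qed
    have Gr: "G iota P obs \<sigma> \<tau> r = lam * G iota P obs \<sigma> \<tau> (\<lambda>_. 1)"
      using ER_G[of \<sigma>] G1pos unfolding lam_def by (simp add: field_simps)
    define cc where "cc = (M + lam) / 2"
    have cc: "M < cc" "cc < lam" using gt unfolding cc_def lam_def by simp_all
    obtain d where d: "\<forall>t s. d t s \<in> AvAct P s"
      and dmax: "\<forall>\<sigma>. scheduler iota P \<sigma> \<longrightarrow> G iota P obs \<sigma> \<tau> (\<lambda>s. r s - cc) \<le> G iota P obs (mkd d) \<tau> (\<lambda>s. r s - cc)"
      using key[OF av tne, of iota obs "\<lambda>s. r s - cc"] by blast
    define d1 where "d1 = restrict d {..n}"
    have d1: "d1 \<in> DS" unfolding d1_def DS_def A_def using d by auto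
    have eqG: "G iota P obs (mk n d1) \<tau> h = G iota P obs (mkd d) \<tau> h" for h
      by (rule G_cong) (auto simp: mk_def mkd_def d1_def n simp del: plen.simps plast.simps)
    define \<sigma>1 where "\<sigma>1 = mk n d1"
    have "G iota P obs \<sigma> \<tau> (\<lambda>s. r s - cc) = (lam - cc) * G iota P obs \<sigma> \<tau> (\<lambda>_. 1)"
      unfolding G_lin Gr by (simp add: algebra_simps)
    also have "\<dots> > 0" using cc G1pos by simp
    finally have "G iota P obs \<sigma>1 \<tau> (\<lambda>s. r s - cc) > 0"
      using dmax sch eqG unfolding \<sigma>1_def by (metis order_less_le_trans)
    then have pos: "G iota P obs \<sigma>1 \<tau> r - cc * G iota P obs \<sigma>1 \<tau> (\<lambda>_. 1) > 0"
      unfolding G_lin .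
    have G1pos': "G iota P obs \<sigma>1 \<tau> (\<lambda>_. 1) > 0"
    proof (rule ccontr)
      assume "\<not> ?thesis"
      then have "G iota P obs \<sigma>1 \<tau> (\<lambda>_. 1) = 0" using G1nn[of \<sigma>1] by simp
      then show False using pos Gb[of \<sigma>1] by simp
    qed
    have "ER \<sigma>1 > cc"
      using pos G1pos' unfolding ER_G by (simp add: field_simps)
    moreover have "ER \<sigma>1 \<le> M" unfolding \<sigma>1_def using leM d1 by blast
    ultimately show False using cc by simp
  qed
  have sch0: "scheduler iota P (mk n d0)" using DC[OF d0(1)] unfolding Sigma_DC_def by blast
  have R: "R_r iota P obs r \<tau> = M"
    unfolding R_r_def
  proof (rule cSup_eq_maximum)
    show "M \<in> (\<lambda>\<sigma>. exp_reward iota P obs r \<sigma> \<tau>) ` {\<sigma>. scheduler iota P \<sigma>}"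
      using sch0 d0(2) unfolding ER_def by force
  next
    fix x assume "x \<in> (\<lambda>\<sigma>. exp_reward iota P obs r \<sigma> \<tau>) ` {\<sigma>. scheduler iota P \<sigma>}"
    then show "x \<le> M" using all unfolding ER_def by auto
  qed
  show ?thesis
  proof (rule bexI[of _ "mk n d0"])
    show "mk n d0 \<in> Sigma_DC iota P (tlen \<tau>)" using DC[OF d0(1)] unfolding n_def .
    show "exp_reward iota P obs r (mk n d0) \<tau> = R_r iota P obs r \<tau> \<and>
      (\<forall>\<sigma>'\<in>Sigma_DC iota P (tlen \<tau>). exp_reward iota P obs r \<sigma>' \<tau> \<le> exp_reward iota P obs r (mk n d0) \<tau>)"
      using R d0(2) all unfolding ER_def Sigma_DC_def n_def by auto
  qed
qed

end
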